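(* Let $L$ be a C-lattice. The following are equivalent: (i) $L$ is sharp; (ii) $a=(a:(a:b))(a:b)$ for all $a,b\in L$; (iii) $(a:b)$ divides $a$ for all $a,b\in L$; (iv) $(a:b)$ divides $a$ whenever $a,b\in L$ satisfy $0<a<b<1$ and $a$ is not a prime element.
   Context: A multiplicative lattice is a complete lattice $(L,\le)$ with bottom $0$ and top $1$ which is also a commutative monoid with identity $1$ such that $a(\bigvee_\alpha b_\alpha)=\bigvee_\alpha(ab_\alpha)$ for all $a,b_\alpha\in L$. For $x,y\in L$, $(y:x)=\bigvee\{a\in L: ax\le y\}$. An element $c$ is compact if $c\le\bigvee S$ implies $c\le\bigvee T$ for some finite $T\subseteq S$. A C-lattice is a multiplicative lattice in which $1$ is compact, the product of two compact elements is compact, and every element is a join of compact elements. A proper element $p\neq 1$ is prime if $xy\le p$ implies $x\le p$ or $y\le p$. We say $a$ divides $b$ if $b=ac$ for some $c\in L$. $L$ is sharp if whenever $a_1a_2\le b$ with $a_1,a_2,b\in L$, there exist $b_1,b_2\in L$ with $a_i\le b_i$ ($i=1,2$) and $b=b_1b_2$. *)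

theory Defs
  imports Main
begin

definition mult_lattice :: "('a::complete_lattice \<Rightarrow> 'a \<Rightarrow> 'a) \<Rightarrow> bool" where
  "mult_lattice m \<longleftrightarrow>
     (\<forall>a b c. m (m a b) c = m a (m b c)) \<and>
     (\<forall>a b. m a b = m b a) \<and>
     (\<forall>a. m a top = a) \<and>
     (\<forall>a B. m a (Sup B) = Sup ((\<lambda>b. m a b) ` B))"

definition residual :: "('a::complete_lattice \<Rightarrow> 'a \<Rightarrow> 'a) \<Rightarrow> 'a \<Rightarrow> 'a \<Rightarrow> 'a" where
  "residual m y x = Sup {a. m a x \<le> y}"

definition compact_elem :: "'a::complete_lattice \<Rightarrow> bool" where
  "compact_elem c \<longleftrightarrow> (\<forall>S. c \<le> Sup S \<longrightarrow> (\<exists>T. T \<subseteq> S \<and> finite T \<and> c \<le> Sup T))"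

definition C_lattice :: "('a::complete_lattice \<Rightarrow> 'a \<Rightarrow> 'a) \<Rightarrow> bool" where
  "C_lattice m \<longleftrightarrow> mult_lattice m \<and> compact_elem (top::'a) \<and>
     (\<forall>a b. compact_elem a \<longrightarrow> compact_elem b \<longrightarrow> compact_elem (m a b)) \<and>
     (\<forall>x::'a. x = Sup {c. compact_elem c \<and> c \<le> x})"

definition prime_elem :: "('a::complete_lattice \<Rightarrow> 'a \<Rightarrow> 'a) \<Rightarrow> 'a \<Rightarrow> bool" where
  "prime_elem m p \<longleftrightarrow> p \<noteq> top \<and> (\<forall>x y. m x y \<le> p \<longrightarrow> x \<le> p \<or> y \<le> p)"

definition divides :: "('a::complete_lattice \<Rightarrow> 'a \<Rightarrow> 'a) \<Rightarrow> 'a \<Rightarrow> 'a \<Rightarrow> bool" where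
  "divides m a b \<longleftrightarrow> (\<exists>c. b = m a c)"

definition sharp :: "('a::complete_lattice \<Rightarrow> 'a \<Rightarrow> 'a) \<Rightarrow> bool" where
  "sharp m \<longleftrightarrow> (\<forall>a1 a2 b. m a1 a2 \<le> b \<longrightarrow>
      (\<exists>b1 b2. a1 \<le> b1 \<and> a2 \<le> b2 \<and> b = m b1 b2))"

end

theory Submission
  imports Defs
begin

lemma ml_sup:
  assumes "mult_lattice m" shows "m z (sup x y) = sup (m z x) (m z y)"
proof -
  have "m z (Sup {x,y}) = Sup ((\<lambda>b. m z b) ` {x,y})"
    using assms unfolding mult_lattice_def by blast
  thus ?thesis by simp
qed

lemma ml_mono:
  assumes "mult_lattice m" "x \<le> y" shows "m z x \<le> m z y"
  using ml_sup[OF assms(1), of z x y] assms(2) by (metis sup.absorb2 sup.cobounded1)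

lemma ml_mono1:
  assumes "mult_lattice m" "x \<le> y" shows "m x z \<le> m y z"
  using ml_mono[OF assms] assms(1) unfolding mult_lattice_def by metis

lemma ml_comm: "mult_lattice m \<Longrightarrow> m x y = m y x"
  unfolding mult_lattice_def by blast

lemma ml_top: "mult_lattice m \<Longrightarrow> m x top = x"
  unfolding mult_lattice_def by blast

lemma ml_top1: "mult_lattice m \<Longrightarrow> m top x = x"
  unfolding mult_lattice_def by metis

lemma ml_bot: "mult_lattice m \<Longrightarrow> m x bot = bot"
  unfolding mult_lattice_def by (metis Sup_empty image_empty)

lemma ml_le: "mult_lattice m \<Longrightarrow> m x y \<le> x"
  by (metis ml_mono ml_top top_greatest)

lemma ml_le2: "mult_lattice m \<Longrightarrow> m x y \<le> y"
  by (metis ml_le ml_comm)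

lemma res_le:
  assumes "mult_lattice m" shows "m (residual m y x) x \<le> y"
proof -
  have "m (residual m y x) x = m x (Sup {a. m a x \<le> y})"
    unfolding residual_def using ml_comm[OF assms] by metis
  also have "\<dots> = Sup ((\<lambda>b. m x b) ` {a. m a x \<le> y})"
    using assms unfolding mult_lattice_def by blast
  also have "\<dots> \<le> y" using ml_comm[OF assms] by (auto intro!: Sup_least)
  finally show ?thesis .
qed

lemma le_res: "m a x \<le> y \<Longrightarrow> a \<le> residual m y x"
  unfolding residual_def by (auto intro: Sup_upper)

lemma res_iff: "mult_lattice m \<Longrightarrow> a \<le> residual m y x \<longleftrightarrow> m a x \<le> y"
  by (meson le_res ml_mono1 order_trans res_le)

lemma i_ii:
  assumes ml: "mult_lattice m" and sh: "sharp m"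
  shows "a = m (residual m a (residual m a b)) (residual m a b)"
proof -
  let ?c = "residual m a b"
  have "m ?c b \<le> a" by (rule res_le[OF ml])
  then obtain b1 b2 where h: "?c \<le> b1" "b \<le> b2" "a = m b1 b2"
    using sh unfolding sharp_def by blast
  have "m b1 b \<le> a" using h ml_mono[OF ml h(2)] by metis
  hence "b1 \<le> ?c" by (rule le_res)
  hence b1: "b1 = ?c" using h(1) by simp
  have "b2 \<le> residual m a ?c" using res_iff[OF ml] h b1 ml_comm[OF ml] by (metis order_refl)
  hence "a \<le> m (residual m a ?c) ?c" using h b1 ml_comm[OF ml] ml_mono1[OF ml] by metis
  moreover have "m (residual m a ?c) ?c \<le> a" by (rule res_le[OF ml])
  ultimately show ?thesis by simp
qed

lemma ii_i:
  assumes ml: "mult_lattice m"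
    and h: "\<forall>a b. a = m (residual m a (residual m a b)) (residual m a b)"
  shows "sharp m"
  unfolding sharp_def
proof (intro allI impI)
  fix a1 a2 b assume a: "m a1 a2 \<le> b"
  let ?c = "residual m b a2"
  have 1: "a1 \<le> ?c" using a by (rule le_res)
  have "m a2 ?c \<le> b" using res_le[OF ml] ml_comm[OF ml] by metis
  hence 2: "a2 \<le> residual m b ?c" by (rule le_res)
  have "b = m ?c (residual m b ?c)" using h ml_comm[OF ml] by metis
  thus "\<exists>b1 b2. a1 \<le> b1 \<and> a2 \<le> b2 \<and> b = m b1 b2" using 1 2 by blast
qed

lemma ii_iii:
  assumes ml: "mult_lattice m"
  shows "(\<forall>a b. a = m (residual m a (residual m a b)) (residual m a b))
            \<longleftrightarrow> (\<forall>a b. divides m (residual m a b) a)"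
proof
  assume h: "\<forall>a b. a = m (residual m a (residual m a b)) (residual m a b)"
  show "\<forall>a b. divides m (residual m a b) a"
    unfolding divides_def using h ml_comm[OF ml] by metis
next
  assume h: "\<forall>a b. divides m (residual m a b) a"
  show "\<forall>a b. a = m (residual m a (residual m a b)) (residual m a b)"
  proof (intro allI)
    fix a b
    obtain d where d: "a = m (residual m a b) d" using h unfolding divides_def by blast
    have "m d (residual m a b) \<le> a" using d ml_comm[OF ml] by (metis order_refl)
    hence "d \<le> residual m a (residual m a b)" by (rule le_res)
    hence "a \<le> m (residual m a (residual m a b)) (residual m a b)"
      using d ml_comm[OF ml] ml_mono1[OF ml] by metis
    moreover have "m (residual m a (residual m a b)) (residual m a b) \<le> a" by (rule res_le[OF ml])
    ultimately show "a = m (residual m a (residual m a b)) (residual m a b)" by simp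
  qed
qed

lemma res_sup:
  assumes ml: "mult_lattice m" shows "residual m a (sup a b) = residual m a b"
proof -
  have "m x (sup a b) \<le> a \<longleftrightarrow> m x b \<le> a" for x
  proof -
    have "m x (sup a b) = sup (m x a) (m x b)" by (rule ml_sup[OF ml])
    moreover have "m x a \<le> a" using ml_le2[OF ml] .
    ultimately show ?thesis by simp
  qed
  thus ?thesis unfolding residual_def by simp
qed

lemma iv_iii:
  assumes ml: "mult_lattice m"
    and h: "\<forall>a b. bot < a \<and> a < b \<and> b < top \<and> \<not> prime_elem m a
                    \<longrightarrow> divides m (residual m a b) a"
  shows "divides m (residual m a b) a"
proof -
  let ?b = "sup a b"
  have eq: "residual m a ?b = residual m a b" by (rule res_sup[OF ml])
  show ?thesis
  proof (cases "a = bot")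
    case True thus ?thesis unfolding divides_def using ml_bot[OF ml] by metis
  next
    case nb: False
    show ?thesis
    proof (cases "?b \<le> a")
      case True
      have "m top b \<le> a" using True ml_top1[OF ml] by simp
      hence "residual m a b = top" using le_res top_le by metis
      thus ?thesis unfolding divides_def using ml_top1[OF ml] by metis
    next
      case False
      hence lt: "a < ?b" by (metis sup.cobounded1 less_le order_refl)
      show ?thesis
      proof (cases "?b = top")
        case True
        have "residual m a ?b = a"
          using True res_iff[OF ml] ml_top[OF ml] by (metis order_antisym order_refl)
        thus ?thesis unfolding divides_def using eq ml_top[OF ml] by metis
      next
        case nt: False
        show ?thesis
        proof (cases "prime_elem m a")
          case True
          have "residual m a ?b \<le> a"
          proof -
            have "m (residual m a ?b) ?b \<le> a" by (rule res_le[OF ml])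
            thus ?thesis using True False unfolding prime_elem_def by blast
          qed
          moreover have "a \<le> residual m a ?b" using le_res ml_le[OF ml] by metis
          ultimately have "residual m a ?b = a" by simp
          thus ?thesis unfolding divides_def using eq ml_top[OF ml] by metis
        next
          case np: False
          have "divides m (residual m a ?b) a"
            using h nb lt nt np by (simp add: bot_less less_le_not_le top.not_eq_extremum)
          thus ?thesis using eq by simp
        qed
      qed
    qed
  qed
qed

theorem proposition2p1:
  fixes m :: "'a::complete_lattice \<Rightarrow> 'a \<Rightarrow> 'a"
  assumes "C_lattice m"
  shows "(sharp m \<longleftrightarrow> (\<forall>a b. a = m (residual m a (residual m a b)) (residual m a b)))
       \<and> ((\<forall>a b. a = m (residual m a (residual m a b)) (residual m a b))
            \<longleftrightarrow> (\<forall>a b. divides m (residual m a b) a))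
       \<and> ((\<forall>a b. divides m (residual m a b) a)
            \<longleftrightarrow> (\<forall>a b. bot < a \<and> a < b \<and> b < top \<and> \<not> prime_elem m a
                    \<longrightarrow> divides m (residual m a b) a))"
proof -
  have ml: "mult_lattice m" using assms unfolding C_lattice_def by blast
  show ?thesis
    using i_ii[OF ml] ii_i[OF ml] ii_iii[OF ml] iv_iii[OF ml] by blast
qed

end
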